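(* The Cantor–Bendixson rank of the poset $\mathcal{Q}$ is $\omega$, the first infinite ordinal.
   Context: $\mathcal{Q}$ is the set $\mathbb{N}\times(\mathbb{N}\cup\{0\})$ (with $\mathbb{N}=\{1,2,\dots\}$) with the relation $(t',r')<(t,r)$ iff $t'\mid t$ and $t'r'<tr$. For a set $\mathcal{P}$ with a transitive relation $<$, an element $p$ is minimal if no $q\in\mathcal{P}$ has $q<p$. Let $\mathcal{P}_0$ be the set of minimal elements of $\mathcal{P}$ and $\bar{\mathcal{P}}_0=\mathcal{P}\setminus\mathcal{P}_0$; for an ordinal $\alpha$, $\mathcal{P}_{\alpha+1}$ is the union of $\mathcal{P}_\alpha$ and the set of minimal elements of $\bar{\mathcal{P}}_\alpha$ (with the induced relation), and $\bar{\mathcal{P}}_{\alpha+1}=\mathcal{P}\setminus\mathcal{P}_{\alpha+1}$; for a limit ordinal $\beta$, $\mathcal{P}_\beta=\bigcup_{\alpha<\beta}\mathcal{P}_\alpha$ and $\bar{\mathcal{P}}_\beta=\bigcap_{\alpha<\beta}\bar{\mathcal{P}}_\alpha$. The Cantor–Bendixson rank $r_{CB}(\mathcal{P})$ is the minimal ordinal $\alpha$ with $\bar{\mathcal{P}}_\alpha=\bar{\mathcal{P}}_{\alpha+1}$. *)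

theory Defs
  imports Main
begin

definition minimal_elems :: "('a \<Rightarrow> 'a \<Rightarrow> bool) \<Rightarrow> 'a set \<Rightarrow> 'a set" where
  "minimal_elems R S = {p \<in> S. \<not> (\<exists>q\<in>S. R q p)}"

text \<open>Finite stages of the Cantor--Bendixson derivation: cb_bar R P n is the complement
  P minus P_n. Since P_(n+1) = P_n union min(P minus P_n), the complement of the next stage
  is the previous complement with its minimal elements removed.\<close>
fun cb_bar :: "('a \<Rightarrow> 'a \<Rightarrow> bool) \<Rightarrow> 'a set \<Rightarrow> nat \<Rightarrow> 'a set" where
  "cb_bar R P 0 = P - minimal_elems R P"
| "cb_bar R P (Suc n) = cb_bar R P n - minimal_elems R (cb_bar R P n)"

definition cb_bar_omega :: "('a \<Rightarrow> 'a \<Rightarrow> bool) \<Rightarrow> 'a set \<Rightarrow> 'a set" where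
  "cb_bar_omega R P = (\<Inter>n. cb_bar R P n)"

definition cb_bar_omega_succ :: "('a \<Rightarrow> 'a \<Rightarrow> bool) \<Rightarrow> 'a set \<Rightarrow> 'a set" where
  "cb_bar_omega_succ R P = cb_bar_omega R P - minimal_elems R (cb_bar_omega R P)"

text \<open>The Cantor--Bendixson rank equals omega: omega is the least ordinal alpha with
  Pbar_alpha = Pbar_(alpha+1), i.e. no finite n has Pbar_n = Pbar_(n+1), but
  Pbar_omega = Pbar_(omega+1).\<close>
definition cb_rank_is_omega :: "('a \<Rightarrow> 'a \<Rightarrow> bool) \<Rightarrow> 'a set \<Rightarrow> bool" where
  "cb_rank_is_omega R P \<longleftrightarrow>
     (\<forall>n. cb_bar R P n \<noteq> cb_bar R P (Suc n)) \<and>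
     cb_bar_omega R P = cb_bar_omega_succ R P"

text \<open>The poset Q = N x (N union {0}) with (t',r') < (t,r) iff t' dvd t and t' r' < t r.\<close>
definition Q_set :: "(nat \<times> nat) set" where
  "Q_set = {(t, r). t \<ge> 1}"

definition Q_less :: "nat \<times> nat \<Rightarrow> nat \<times> nat \<Rightarrow> bool" where
  "Q_less p q \<longleftrightarrow> fst p dvd fst q \<and> fst p * snd p < fst q * snd q"

end

theory Submission
  imports Defs
begin

lemma mem: "p \<in> S - minimal_elems R S \<longleftrightarrow> p \<in> S \<and> (\<exists>q\<in>S. R q p)"
  by (auto simp: minimal_elems_def)

lemma base: "cb_bar Q_less Q_set 0 = {(t,r). t \<ge> 1 \<and> r \<ge> 1 \<and> 0 < t*r}"
proof (rule set_eqI)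
  fix p :: "nat \<times> nat"
  obtain t r where p: "p = (t,r)" by fastforce
  show "p \<in> cb_bar Q_less Q_set 0 \<longleftrightarrow> p \<in> {(t,r). t \<ge> 1 \<and> r \<ge> 1 \<and> 0 < t*r}"
  proof
    assume "p \<in> cb_bar Q_less Q_set 0"
    then obtain a b where "(a,b) \<in> Q_set" "Q_less (a,b) (t,r)" "t \<ge> 1"
      unfolding cb_bar.simps mem by (auto simp: p Q_set_def)
    then have "0 < t*r" unfolding Q_less_def by (metis fst_conv le0 le_less_trans snd_conv)
    then show "p \<in> {(t,r). t \<ge> 1 \<and> r \<ge> 1 \<and> 0 < t*r}"
      by (auto simp: p)
  next
    assume "p \<in> {(t,r). t \<ge> 1 \<and> r \<ge> 1 \<and> 0 < t*r}"
    then have "t \<ge> 1" "r \<ge> 1" by (auto simp: p)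
    have "(1,0) \<in> Q_set" by (simp add: Q_set_def)
    moreover have "Q_less (1,0) (t,r)" using \<open>t \<ge> 1\<close> \<open>r \<ge> 1\<close> by (simp add: Q_less_def)
    ultimately show "p \<in> cb_bar Q_less Q_set 0"
      using \<open>t \<ge> 1\<close> unfolding cb_bar.simps mem by (auto simp: p Q_set_def)
  qed
qed

lemma stage: "cb_bar Q_less Q_set n = {(t,r). t \<ge> 1 \<and> r \<ge> 1 \<and> n < t*r}"
proof (induction n)
  case 0
  then show ?case by (rule base)
next
  case (Suc n)
  let ?S = "{(t,r). t \<ge> 1 \<and> r \<ge> 1 \<and> n < t*r} :: (nat\<times>nat) set"
  have "?S - minimal_elems Q_less ?S = {(t,r). t \<ge> 1 \<and> r \<ge> 1 \<and> Suc n < t*r}"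
  proof (rule set_eqI)
    fix p :: "nat \<times> nat"
    obtain t r where p: "p = (t,r)" by fastforce
    have w: "(1, Suc n) \<in> ?S" by simp
    show "p \<in> ?S - minimal_elems Q_less ?S \<longleftrightarrow> p \<in> {(t,r). t \<ge> 1 \<and> r \<ge> 1 \<and> Suc n < t*r}"
    proof
      assume a: "p \<in> ?S - minimal_elems Q_less ?S"
      then obtain q where q: "q \<in> ?S" "Q_less q (t,r)"
        unfolding mem by (auto simp: p)
      obtain a b where "q = (a,b)" by fastforce
      with q a show "p \<in> {(t,r). t \<ge> 1 \<and> r \<ge> 1 \<and> Suc n < t*r}"
        by (auto simp: p Q_less_def)
    next
      assume a: "p \<in> {(t,r). t \<ge> 1 \<and> r \<ge> 1 \<and> Suc n < t*r}"
      then have "Q_less (1, Suc n) (t,r)" by (auto simp: p Q_less_def)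
      with w a show "p \<in> ?S - minimal_elems Q_less ?S"
        unfolding mem p by (intro conjI bexI[of _ "(1, Suc n)"]) auto
    qed
  qed
  then show ?case using Suc by simp
qed

theorem theorem6p5:
  shows "cb_rank_is_omega Q_less Q_set"
proof -
  have ne: "cb_bar Q_less Q_set n \<noteq> cb_bar Q_less Q_set (Suc n)" for n
  proof -
    have "(1, Suc n) \<in> cb_bar Q_less Q_set n" by (simp add: stage)
    moreover have "(1, Suc n) \<notin> cb_bar Q_less Q_set (Suc n)" by (simp only: stage) simp
    ultimately show ?thesis by blast
  qed
  have e: "cb_bar_omega Q_less Q_set = {}"
  proof -
    have "p \<notin> cb_bar Q_less Q_set (fst p * snd p)" for p
      by (cases p) (simp only: stage, simp)
    then show ?thesis unfolding cb_bar_omega_def by blast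
  qed
  show ?thesis unfolding cb_rank_is_omega_def cb_bar_omega_succ_def e
    using ne by simp
qed

end
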